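(* Consider the algorithm ECCom described in the context, and fix an epoch $i$. If $f_N^{i'}+f_L^{i'}\le 1/4$, then with high probability $f_N^{i}+f_L^{i}\le 1/3$.
   Context: Setting. A dynamic system of IDs with at least $n_0$ good IDs at all times; "with high probability" means with probability at least $1-n_0^{-c'}$ for a desired constant $c'$ (relative to a lifetime of $O(n_0^{\gamma})$ events, $\gamma\ge1$ a constant). A committee runs algorithm ECCom: it maintains $\mathcal S_{\mathrm{old}}$, the set of IDs present after the most recent purge (start of the epoch), and $\mathcal S$, the current set of IDs. It uses a hash function $h'$, unknown to the IDs and behaving as a uniformly random function to $[0,1)$, and places an ID $v$ in the sample when $h'(v)\le c\log n_0/|\mathcal S_{\mathrm{old}}|$, where $c>0$ is a sufficiently large constant depending on $\gamma$. The sample set $\mathcal S'_{\mathrm{old}}$ consists of the sampled IDs of $\mathcal S_{\mathrm{old}}$ at the start of the epoch; the current sample set $\mathcal S'$ consists of the sampled IDs currently present (sampled newly joined IDs are added, departed IDs removed). A purge is triggered when $|(\mathcal S'\cup\mathcal S'_{\mathrm{old}})\setminus(\mathcal S'\cap\mathcal S'_{\mathrm{old}})|\ge|\mathcal S'_{\mathrm{old}}|/4$. Notation. For epoch $i$: $f_N^i$ is the fraction (relative to $|\mathcal S_{\mathrm{old}}|$) of IDs that joined during the epoch and remain active, and $f_L^i$ is the fraction of IDs of $\mathcal S_{\mathrm{old}}$ that have left; $f_N^{i'}$ and $f_L^{i'}$ are the corresponding fractions for the sample sets (relative to $|\mathcal S'_{\mathrm{old}}|$, counting sampled new IDs remaining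 in $\mathcal S'$ and IDs of $\mathcal S'_{\mathrm{old}}$ that have left). *)

theory Defs
  imports "HOL-Probability.Probability"
begin

definition hash_space :: "'a set \<Rightarrow> ('a \<Rightarrow> real) measure" where
  "hash_space U = PiM U (\<lambda>_. uniform_measure lborel {0..<1::real})"

definition sample_threshold :: "real \<Rightarrow> nat \<Rightarrow> 'a set \<Rightarrow> real" where
  "sample_threshold c n0 S_old = c * ln (real n0) / real (card S_old)"

definition sampled :: "real \<Rightarrow> ('a \<Rightarrow> real) \<Rightarrow> 'a set \<Rightarrow> 'a set" where
  "sampled q h A = {v \<in> A. h v \<le> q}"

definition frac_new :: "'a set \<Rightarrow> 'a set \<Rightarrow> real" where
  "frac_new Old Cur = real (card (Cur - Old)) / real (card Old)"

definition frac_left :: "'a set \<Rightarrow> 'a set \<Rightarrow> real" where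
  "frac_left Old Cur = real (card (Old - Cur)) / real (card Old)"

end

theory Submission
  imports Defs
begin

abbreviation "M0 \<equiv> uniform_measure lborel {0..<1::real}"

lemma M0_prob: "prob_space M0"
  by (rule prob_space_uniform_measure) auto

lemma M0_le: assumes "0 \<le> q" "q \<le> 1" shows "emeasure M0 {..q} = ennreal q"
proof -
  have "emeasure M0 {..q} = emeasure lborel ({0..<1} \<inter> {..q}) / emeasure lborel {0..<1::real}"
    by (rule emeasure_uniform_measure) auto
  also have "emeasure lborel ({0..<1} \<inter> {..q}) = ennreal q"
  proof (cases "q = 1")
    case True
    then have "{0..<1} \<inter> {..q} = {0..<1::real}" by auto
    then show ?thesis using True by simp
  next
    case False
    then have "{0..<1} \<inter> {..q} = {0..q::real}" using assms by auto
    then show ?thesis using assms by simp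
  qed
  finally show ?thesis by (simp add: divide_ennreal_def)
qed

lemma M0_gt: assumes "0 \<le> q" "q \<le> 1" shows "emeasure M0 {q<..} = ennreal (1 - q)"
proof -
  interpret prob_space M0 by (rule M0_prob)
  have "{q<..} = space M0 - {..q}" by auto
  have "emeasure M0 (space M0 - {..q}) = emeasure M0 (space M0) - emeasure M0 {..q}"
    by (rule emeasure_compl) (auto simp: M0_le[OF assms] del: emeasure_uniform_measure)
  moreover have "emeasure M0 UNIV = 1" using emeasure_space_1 by simp
  ultimately have "emeasure M0 {q<..} = 1 - emeasure M0 {..q}"
    using \<open>{q<..} = space M0 - {..q}\<close> by (simp add: emeasure_space_1 del: emeasure_uniform_measure)
  then show ?thesis using M0_le[OF assms] assms
    by (simp add: ennreal_minus[symmetric] del: emeasure_uniform_measure)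
qed

lemma M0_int:
  assumes "0 \<le> q" "q \<le> 1"
  shows "(\<integral>\<^sup>+ x. ennreal (exp (- l * (w * (if x \<le> q then 1 else 0)))) \<partial>M0)
     = ennreal (1 - q + q * exp (- l * w))"
proof -
  have "(\<integral>\<^sup>+ x. ennreal (exp (- l * (w * (if x \<le> q then 1 else 0)))) \<partial>M0)
     = (\<integral>\<^sup>+ x. ennreal (exp (- l * w)) * indicator {..q} x + indicator {q<..} x \<partial>M0)"
    by (intro nn_integral_cong) (auto split: split_indicator)
  also have "\<dots> = ennreal (exp (- l * w)) * emeasure M0 {..q} + emeasure M0 {q<..}"
    by (subst nn_integral_add) (auto simp: nn_integral_cmult)
  also have "\<dots> = ennreal (1 - q + q * exp (- l * w))"
    using assms by (simp add: M0_le M0_gt ennreal_mult[symmetric] ennreal_plus[symmetric] algebra_simps del: emeasure_uniform_measure)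
  finally show ?thesis .
qed

lemma hash_prob: "prob_space (hash_space U)"
  unfolding hash_space_def by (rule prob_space_PiM) (rule M0_prob)

lemma ev_meas:
  assumes "finite U"
  shows "{h \<in> space (hash_space U). (\<Sum>v\<in>U. w v * (if h v \<le> q then 1 else (0::real))) \<le> 0}
           \<in> sets (hash_space U)"
  unfolding hash_space_def by measurable

lemma mgf:
  fixes U :: "'a set" and w :: "'a \<Rightarrow> real"
  assumes U: "finite U" and q: "0 \<le> q" "q \<le> 1" and l: "l \<ge> 0"
  shows "emeasure (hash_space U) {h \<in> space (hash_space U). (\<Sum>v\<in>U. w v * (if h v \<le> q then 1 else 0)) \<le> 0}
     \<le> ennreal (exp (q * (\<Sum>v\<in>U. exp (- l * w v) - 1)))"
proof -
  interpret product_sigma_finite "\<lambda>_::'a. M0"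
    unfolding product_sigma_finite_def using M0_prob prob_space_imp_sigma_finite by blast
  define A where "A = {h \<in> space (hash_space U). (\<Sum>v\<in>U. w v * (if h v \<le> q then 1 else (0::real))) \<le> 0}"
  have Am: "A \<in> sets (hash_space U)" unfolding A_def by (rule ev_meas[OF U])
  have "emeasure (hash_space U) A = (\<integral>\<^sup>+ h. indicator A h \<partial>hash_space U)"
    using Am by simp
  also have "\<dots> \<le> (\<integral>\<^sup>+ h. (\<Prod>v\<in>U. ennreal (exp (- l * (w v * (if h v \<le> q then 1 else 0))))) \<partial>hash_space U)"
  proof (rule nn_integral_mono)
    fix h assume "h \<in> space (hash_space U)"
    show "indicator A h \<le> (\<Prod>v\<in>U. ennreal (exp (- l * (w v * (if h v \<le> q then 1 else 0)))))"
    proof (cases "h \<in> A")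
      case True
      then have s: "(\<Sum>v\<in>U. w v * (if h v \<le> q then 1 else (0::real))) \<le> 0" unfolding A_def by auto
      have "(\<Prod>v\<in>U. ennreal (exp (- l * (w v * (if h v \<le> q then 1 else 0)))))
           = ennreal (\<Prod>v\<in>U. exp (- l * (w v * (if h v \<le> q then 1 else 0))))"
        by (rule prod_ennreal) auto
      also have "(\<Prod>v\<in>U. exp (- l * (w v * (if h v \<le> q then 1 else 0))))
           = exp (\<Sum>v\<in>U. - l * (w v * (if h v \<le> q then 1 else 0)))"
        by (rule exp_sum[OF U, symmetric])
      also have "\<dots> = exp (- l * (\<Sum>v\<in>U. w v * (if h v \<le> q then 1 else 0)))"
        by (simp only: sum_distrib_left)
      finally have P: "(\<Prod>v\<in>U. ennreal (exp (- l * (w v * (if h v \<le> q then 1 else 0)))))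
           = ennreal (exp (- l * (\<Sum>v\<in>U. w v * (if h v \<le> q then 1 else 0))))" .
      have "1 \<le> exp (- l * (\<Sum>v\<in>U. w v * (if h v \<le> q then 1 else (0::real))))"
        using s l by (simp add: mult_nonneg_nonpos)
      then have "ennreal 1 \<le> ennreal (exp (- l * (\<Sum>v\<in>U. w v * (if h v \<le> q then 1 else (0::real)))))"
        by (rule ennreal_leI)
      then show ?thesis using True P by simp
    qed simp
  qed
  also have "\<dots> = (\<Prod>v\<in>U. \<integral>\<^sup>+ x. ennreal (exp (- l * (w v * (if x \<le> q then 1 else 0)))) \<partial>M0)"
    unfolding hash_space_def by (rule product_nn_integral_prod[OF U]) measurable
  also have "\<dots> = (\<Prod>v\<in>U. ennreal (1 - q + q * exp (- l * w v)))"
    by (intro prod.cong refl M0_int q)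
  also have "\<dots> = ennreal (\<Prod>v\<in>U. 1 - q + q * exp (- l * w v))"
    using q by (intro prod_ennreal) (auto intro: add_nonneg_nonneg)
  also have "\<dots> \<le> ennreal (\<Prod>v\<in>U. exp (q * (exp (- l * w v) - 1)))"
  proof (intro ennreal_leI prod_mono conjI)
    fix v assume "v \<in> U"
    have "1 + q * (exp (- l * w v) - 1) \<le> exp (q * (exp (- l * w v) - 1))"
      by (rule exp_ge_add_one_self)
    then show "1 - q + q * exp (- l * w v) \<le> exp (q * (exp (- l * w v) - 1))"
      by (simp add: algebra_simps)
    show "0 \<le> 1 - q + q * exp (- l * w v)" using q by (simp add: add_nonneg_nonneg)
  qed
  also have "(\<Prod>v\<in>U. exp (q * (exp (- l * w v) - 1))) = exp (\<Sum>v\<in>U. q * (exp (- l * w v) - 1))"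
    by (rule exp_sum[OF U, symmetric])
  also have "\<dots> = exp (q * (\<Sum>v\<in>U. exp (- l * w v) - 1))"
    by (simp only: sum_distrib_left)
  finally show ?thesis unfolding A_def .
qed

lemma sum3:
  fixes U A B C :: "'a set" and \<alpha> \<beta> \<gamma> :: real
  assumes U: "finite U" and "A \<subseteq> U" "B \<subseteq> U" "C \<subseteq> U"
    and "A \<inter> B = {}" "A \<inter> C = {}" "B \<inter> C = {}"
  shows "(\<Sum>v\<in>U. (if v \<in> A then \<alpha> else if v \<in> B then \<beta> else if v \<in> C then \<gamma> else 0))
     = \<alpha> * card A + \<beta> * card B + \<gamma> * card C"
proof -
  have "(\<Sum>v\<in>U. (if v \<in> A then \<alpha> else if v \<in> B then \<beta> else if v \<in> C then \<gamma> else 0))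
     = (\<Sum>v\<in>U. \<alpha> * indicator A v + \<beta> * indicator B v + \<gamma> * indicator C v)"
    using assms by (intro sum.cong) (auto split: split_indicator)
  also have "\<dots> = \<alpha> * (\<Sum>v\<in>U. indicator A v) + \<beta> * (\<Sum>v\<in>U. indicator B v) + \<gamma> * (\<Sum>v\<in>U. indicator C v)"
    by (simp add: sum.distrib sum_distrib_left)
  also have "\<dots> = \<alpha> * card A + \<beta> * card B + \<gamma> * card C"
  proof -
    have *: "\<And>X. X \<subseteq> U \<Longrightarrow> (\<Sum>v\<in>U. indicator X v :: real) = real (card X)"
    proof -
      fix X assume "X \<subseteq> U"
      then have "U \<inter> {v. v \<in> X} = X" by auto
      then show "(\<Sum>v\<in>U. indicator X v :: real) = real (card X)"
        unfolding indicator_def using U by simp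
    qed
    show ?thesis using assms by (simp add: *)
  qed
  finally show ?thesis .
qed

lemma meas_le:
  assumes "A \<in> sets (hash_space U)" "emeasure (hash_space U) A \<le> ennreal x" "0 \<le> x"
  shows "measure (hash_space U) A \<le> x"
proof -
  interpret prob_space "hash_space U" by (rule hash_prob)
  show ?thesis using assms by (simp add: emeasure_eq_measure)
qed

lemma num1: "exp (1/20::real) \<le> 1 + 1/20 + 1/400"
  using exp_bound[of "1/20::real"] by (simp add: power2_eq_square)

lemma exp_neg_le: assumes "0 \<le> (x::real)" shows "exp (- x) \<le> 1 / (1 + x + x\<^sup>2 / 2)"
proof -
  have "1 + x + x\<^sup>2 / 2 \<le> exp x" by (rule exp_lower_Taylor_quadratic[OF assms])
  moreover have "0 < 1 + x + x\<^sup>2 / 2" using assms by (simp add: add_pos_nonneg)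
  ultimately show ?thesis by (simp add: exp_minus divide_simps)
qed

lemma num2: "exp (- (1/5::real)) \<le> 1 - 18/100"
proof -
  have "exp (- (1/5::real)) \<le> 1 / (1 + 1/5 + (1/5)\<^sup>2 / 2)" by (rule exp_neg_le) simp
  then show ?thesis by (simp add: power2_eq_square)
qed

lemma num3: "exp (- (3/20::real)) \<le> 1 - 13/100"
proof -
  have "exp (- (3/20::real)) \<le> 1 / (1 + 3/20 + (3/20)\<^sup>2 / 2)" by (rule exp_neg_le) simp
  then show ?thesis by (simp add: power2_eq_square)
qed

lemma num4: "exp (- (1::real)) \<le> 1/2"
proof -
  have "exp (- (1::real)) \<le> 1 / (1 + 1 + 1\<^sup>2 / 2)" by (rule exp_neg_le) simp
  then show ?thesis by (simp add: power2_eq_square)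
qed

lemma lin_aux:
  fixes X Y Z a b d n :: real
  assumes "X \<le> -18/100*d" "Y \<le> -13/100*b" "Z \<le> (1/20+1/400)*a" "0 \<le> b" "0 \<le> n"
    "a + b = n" "n/3 < d + b"
  shows "X + Y + Z \<le> -n/200"
  using assms by argo

lemma one_t:
  fixes U So St :: "'a set" and q :: real
  assumes U: "finite U" and So: "So \<subseteq> U" and St: "St \<subseteq> U" and n: "card So > 0"
    and q: "0 \<le> q" "q \<le> 1"
  shows "\<exists>B\<in>sets (hash_space U).
     {h \<in> space (hash_space U).
        frac_new (sampled q h So) (sampled q h St) + frac_left (sampled q h So) (sampled q h St) \<le> 1/4 \<and>
        frac_new So St + frac_left So St > 1/3} \<subseteq> B \<and>
     measure (hash_space U) B \<le> 2 * exp (- (q * card So) / 200)"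
proof (cases "frac_new So St + frac_left So St > 1/3")
  case False
  then show ?thesis by (intro bexI[of _ "{}"]) auto
next
  case cond: True
  let ?P = "hash_space U"
  let ?X = "\<lambda>h v. (if h v \<le> q then 1 else (0::real))"
  define w1 where "w1 v = (if v \<in> St - So then 4 else if v \<in> So - St then 3 else if v \<in> So \<inter> St then -1 else (0::real))" for v
  define w2 where "w2 v = (if v \<in> So then 1 else (0::real))" for v
  define Z1 where "Z1 = {h \<in> space ?P. (\<Sum>v\<in>U. w1 v * ?X h v) \<le> 0}"
  define Z2 where "Z2 = {h \<in> space ?P. (\<Sum>v\<in>U. w2 v * ?X h v) \<le> 0}"
  have Z1m: "Z1 \<in> sets ?P" unfolding Z1_def by (rule ev_meas[OF U])
  have Z2m: "Z2 \<in> sets ?P" unfolding Z2_def by (rule ev_meas[OF U])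
  have fin: "finite So" "finite St" using U So St finite_subset by auto
  define a where "a = card (So \<inter> St)"
  define b where "b = card (So - St)"
  define d where "d = card (St - So)"
  define n where "n = card So"
  have abn: "real a + real b = real n"
  proof -
    have "So = (So \<inter> St) \<union> (So - St)" by auto
    then have "card So = card (So \<inter> St) + card (So - St)"
      using fin by (metis card_Un_disjoint finite_Diff finite_Int Diff_disjoint Int_Diff_disjoint inf_commute)
    then show ?thesis unfolding a_def b_def n_def by simp
  qed
  have npos: "real n > 0" using n n_def by simp
  have bd: "real d + real b > real n / 3"
    using cond npos unfolding frac_new_def frac_left_def d_def b_def n_def
    by (simp add: add_divide_distrib[symmetric] divide_simps)
  have s1: "(\<Sum>v\<in>U. exp (- (1/20) * w1 v) - 1)
      = (exp (- (1/5)) - 1) * d + (exp (- (3/20)) - 1) * b + (exp (1/20) - 1) * a"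
  proof -
    have "(\<Sum>v\<in>U. exp (- (1/20) * w1 v) - 1)
       = (\<Sum>v\<in>U. (if v \<in> St - So then exp (- (1/5)) - 1 else if v \<in> So - St then exp (- (3/20)) - 1
            else if v \<in> So \<inter> St then exp (1/20) - 1 else 0))"
      by (intro sum.cong) (auto simp: w1_def)
    also have "\<dots> = (exp (- (1/5)) - 1) * d + (exp (- (3/20)) - 1) * b + (exp (1/20) - 1) * a"
      unfolding a_def b_def d_def using So St by (intro sum3[OF U]) auto
    finally show ?thesis .
  qed
  have "(exp (- (1/5)) - 1) * real d \<le> (- 18/100) * real d"
    using num2 by (intro mult_right_mono) auto
  moreover have "(exp (- (3/20)) - 1) * real b \<le> (- 13/100) * real b"
    using num3 by (intro mult_right_mono) auto
  moreover have "(exp (1/20) - 1) * real a \<le> (1/20 + 1/400) * real a"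
    using num1 by (intro mult_right_mono) auto
  moreover note calc = calculation
  have "(\<Sum>v\<in>U. exp (- (1/20) * w1 v) - 1) \<le> - real n / 200"
  proof -
    have "real b \<ge> 0" "real n \<ge> 0" by auto
    with calc show ?thesis unfolding s1 using abn bd by (intro lin_aux) auto
  qed
  then have "q * (\<Sum>v\<in>U. exp (- (1/20) * w1 v) - 1) \<le> q * (- real n / 200)"
    using q by (intro mult_left_mono) auto
  then have ex1: "exp (q * (\<Sum>v\<in>U. exp (- (1/20) * w1 v) - 1)) \<le> exp (- (q * card So) / 200)"
    unfolding n_def by simp
  then have "emeasure ?P Z1 \<le> ennreal (exp (- (q * card So) / 200))"
  proof -
    have "emeasure ?P Z1 \<le> ennreal (exp (q * (\<Sum>v\<in>U. exp (- (1/20) * w1 v) - 1)))"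
      unfolding Z1_def by (rule mgf[OF U q]) simp
    also have "\<dots> \<le> ennreal (exp (- (q * card So) / 200))" using ex1 by (rule ennreal_leI)
    finally show ?thesis .
  qed
  then have m1: "measure ?P Z1 \<le> exp (- (q * card So) / 200)"
    by (intro meas_le Z1m) auto
  have s2: "(\<Sum>v\<in>U. exp (- 1 * w2 v) - 1) = (exp (- 1) - 1) * n"
  proof -
    have "(\<Sum>v\<in>U. exp (- 1 * w2 v) - 1)
       = (\<Sum>v\<in>U. (if v \<in> So then exp (- 1) - 1 else if v \<in> {} then 0 else if v \<in> {} then 0 else 0))"
      by (intro sum.cong) (auto simp: w2_def)
    also have "\<dots> = (exp (- 1) - 1) * n + (0::real) * card ({}::'a set) + (0::real) * card ({}::'a set)"
      unfolding n_def using So by (intro sum3[OF U]) auto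
    finally show ?thesis by simp
  qed
  have "(exp (- 1) - 1) * real n \<le> (- 1/2) * real n"
    using num4 by (intro mult_right_mono) auto
  then have "(\<Sum>v\<in>U. exp (- 1 * w2 v) - 1) \<le> - real n / 200"
    using s2 npos by linarith
  then have "q * (\<Sum>v\<in>U. exp (- 1 * w2 v) - 1) \<le> q * (- real n / 200)"
    using q by (intro mult_left_mono) auto
  then have ex2: "exp (q * (\<Sum>v\<in>U. exp (- 1 * w2 v) - 1)) \<le> exp (- (q * card So) / 200)"
    unfolding n_def by simp
  then have "emeasure ?P Z2 \<le> ennreal (exp (- (q * card So) / 200))"
  proof -
    have "emeasure ?P Z2 \<le> ennreal (exp (q * (\<Sum>v\<in>U. exp (- 1 * w2 v) - 1)))"
      unfolding Z2_def by (rule mgf[OF U q]) simp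
    also have "\<dots> \<le> ennreal (exp (- (q * card So) / 200))" using ex2 by (rule ennreal_leI)
    finally show ?thesis .
  qed
  then have m2: "measure ?P Z2 \<le> exp (- (q * card So) / 200)"
    by (intro meas_le Z2m) auto
  have sub: "{h \<in> space ?P.
        frac_new (sampled q h So) (sampled q h St) + frac_left (sampled q h So) (sampled q h St) \<le> 1/4 \<and>
        frac_new So St + frac_left So St > 1/3} \<subseteq> Z1 \<union> Z2"
  proof (intro subsetI)
    fix h assume "h \<in> {h \<in> space ?P.
        frac_new (sampled q h So) (sampled q h St) + frac_left (sampled q h So) (sampled q h St) \<le> 1/4 \<and>
        frac_new So St + frac_left So St > 1/3}"
    then have hs: "h \<in> space ?P" and ev: "frac_new (sampled q h So) (sampled q h St) + frac_left (sampled q h So) (sampled q h St) \<le> 1/4"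
      by auto
    define XA where "XA = {v \<in> St - So. h v \<le> q}"
    define XB where "XB = {v \<in> So - St. h v \<le> q}"
    define XC where "XC = {v \<in> So \<inter> St. h v \<le> q}"
    have e1: "sampled q h St - sampled q h So = XA" unfolding sampled_def XA_def by auto
    have e2: "sampled q h So - sampled q h St = XB" unfolding sampled_def XB_def by auto
    have e3: "sampled q h So = XB \<union> XC" unfolding sampled_def XB_def XC_def by auto
    have finX: "finite XB" "finite XC" "finite XA" using fin unfolding XA_def XB_def XC_def by auto
    have cm: "card (sampled q h So) = card XB + card XC"
      unfolding e3 using finX by (intro card_Un_disjoint) (auto simp: XB_def XC_def)
    have sum1: "(\<Sum>v\<in>U. w1 v * ?X h v) = (4::real) * card XA + (3::real) * card XB + (-1::real) * card XC"
    proof -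
      have "(\<Sum>v\<in>U. w1 v * ?X h v) = (\<Sum>v\<in>U. (if v \<in> XA then 4 else if v \<in> XB then 3 else if v \<in> XC then -1 else 0))"
        by (intro sum.cong) (auto simp: w1_def XA_def XB_def XC_def)
      also have "\<dots> = (4::real) * card XA + (3::real) * card XB + (-1::real) * card XC"
        using So St by (intro sum3[OF U]) (auto simp: XA_def XB_def XC_def)
      finally show ?thesis .
    qed
    have sum2: "(\<Sum>v\<in>U. w2 v * ?X h v) = (1::real) * card (sampled q h So) + (0::real) * card ({}::'a set) + (0::real) * card ({}::'a set)"
    proof -
      have "(\<Sum>v\<in>U. w2 v * ?X h v) = (\<Sum>v\<in>U. (if v \<in> sampled q h So then 1 else if v \<in> {} then 0 else if v \<in> {} then 0 else 0))"
        by (intro sum.cong) (auto simp: w2_def sampled_def)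
      also have "\<dots> = (1::real) * card (sampled q h So) + (0::real) * card ({}::'a set) + (0::real) * card ({}::'a set)"
        using So by (intro sum3[OF U]) (auto simp: sampled_def)
      finally show ?thesis .
    qed
    show "h \<in> Z1 \<union> Z2"
    proof (cases "card (sampled q h So) = 0")
      case True
      then show ?thesis using sum2 hs unfolding Z2_def by simp
    next
      case False
      then have mpos: "real (card XB + card XC) > 0" using cm by (simp only: of_nat_0_less_iff)
      from ev have "real (card XA) / real (card XB + card XC) + real (card XB) / real (card XB + card XC) \<le> 1/4"
        unfolding frac_new_def frac_left_def e1 e2 cm by simp
      then have "4 * (real (card XA) + real (card XB)) \<le> real (card XB + card XC)"
        using mpos by (simp add: add_divide_distrib[symmetric] divide_simps)
      then have "(\<Sum>v\<in>U. w1 v * ?X h v) \<le> 0" using sum1 by simp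
      then show ?thesis using hs unfolding Z1_def by simp
    qed
  qed
  show ?thesis
  proof (intro bexI[of _ "Z1 \<union> Z2"] conjI)
    show "Z1 \<union> Z2 \<in> sets ?P" using Z1m Z2m by auto
    show "measure ?P (Z1 \<union> Z2) \<le> 2 * exp (- (q * card So) / 200)"
      using measure_Un_le[OF Z1m Z2m] m1 m2 by linarith
  qed (rule sub)
qed

lemma c_ln_le:
  fixes c :: real and n0 :: nat
  assumes c: "c \<ge> 0" and n0: "real n0 \<ge> 4 * c\<^sup>2" "n0 \<ge> 1"
  shows "c * ln (real n0) \<le> real n0"
proof -
  have sp: "sqrt (real n0) > 0" using n0 by simp
  have "ln (real n0) = 2 * ln (sqrt (real n0))"
    using n0 by (simp add: ln_sqrt)
  also have "\<dots> \<le> 2 * sqrt (real n0)" using ln_le_minus_one[OF sp] by simp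
  finally have l: "ln (real n0) \<le> 2 * sqrt (real n0)" .
  have "2 * c \<le> sqrt (real n0)"
  proof -
    have "sqrt ((2 * c)\<^sup>2) \<le> sqrt (real n0)"
      using n0 by (intro real_sqrt_le_mono) (simp add: power_mult_distrib)
    moreover have "sqrt ((2 * c)\<^sup>2) = 2 * c" using c by (simp add: real_sqrt_mult)
    ultimately show ?thesis by linarith
  qed
  have "c * ln (real n0) \<le> c * (2 * sqrt (real n0))" using l c by (rule mult_left_mono)
  also have "\<dots> = (2 * c) * sqrt (real n0)" by simp
  also have "\<dots> \<le> sqrt (real n0) * sqrt (real n0)"
    using \<open>2 * c \<le> sqrt (real n0)\<close> sp by (intro mult_right_mono) auto
  also have "\<dots> = real n0" by simp
  finally show ?thesis .
qed

theorem lemma5: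
  fixes \<gamma> c' K :: real
  assumes "\<gamma> \<ge> 1" and "c' > 0" and "K > 0"
  shows "\<exists>c0. \<forall>c\<ge>c0. \<exists>N. \<forall>(n0::nat)\<ge>N. \<forall>(U::'a set) S_old (S::nat \<Rightarrow> 'a set) (T::nat).
           finite U \<longrightarrow> S_old \<subseteq> U \<longrightarrow> card S_old \<ge> n0 \<longrightarrow>
           (\<forall>t<T. S t \<subseteq> U \<and> card (S t) \<ge> n0) \<longrightarrow>
           real T \<le> K * real n0 powr \<gamma> \<longrightarrow>
           measure (hash_space U)
             {h \<in> space (hash_space U). \<exists>t<T.
                let q = sample_threshold c n0 S_old;
                    S'_old = sampled q h S_old;
                    S' = sampled q h (S t)
                in frac_new S'_old S' + frac_left S'_old S' \<le> 1/4 \<and>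
                   frac_new S_old (S t) + frac_left S_old (S t) > 1/3}
           \<le> real n0 powr (- c')"
proof -
  define c0 where "c0 = 200 * (\<gamma> + c' + 1)"
  show ?thesis
  proof (intro exI[of _ c0] allI impI)
    fix c assume cc0: "c \<ge> c0"
    have cpos: "c > 0" using cc0 assms unfolding c0_def by argo
    define N where "N = nat \<lceil>4 * c\<^sup>2\<rceil> + nat \<lceil>2 * K\<rceil> + 2"
    show "\<exists>N. \<forall>(n0::nat)\<ge>N. \<forall>(U::'a set) S_old (S::nat \<Rightarrow> 'a set) (T::nat).
           finite U \<longrightarrow> S_old \<subseteq> U \<longrightarrow> card S_old \<ge> n0 \<longrightarrow>
           (\<forall>t<T. S t \<subseteq> U \<and> card (S t) \<ge> n0) \<longrightarrow>
           real T \<le> K * real n0 powr \<gamma> \<longrightarrow>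
           measure (hash_space U)
             {h \<in> space (hash_space U). \<exists>t<T.
                let q = sample_threshold c n0 S_old;
                    S'_old = sampled q h S_old;
                    S' = sampled q h (S t)
                in frac_new S'_old S' + frac_left S'_old S' \<le> 1/4 \<and>
                   frac_new S_old (S t) + frac_left S_old (S t) > 1/3}
           \<le> real n0 powr (- c')"
    proof (intro exI[of _ N] allI impI)
      fix n0 :: nat and U :: "'a set" and S_old and S :: "nat \<Rightarrow> 'a set" and T :: nat
      assume n0N: "n0 \<ge> N" and U: "finite U" and So: "S_old \<subseteq> U" and nSo: "card S_old \<ge> n0"
        and St: "\<forall>t<T. S t \<subseteq> U \<and> card (S t) \<ge> n0" and TK: "real T \<le> K * real n0 powr \<gamma>"
      let ?P = "hash_space U"
      define n where "n = card S_old"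
      define q where "q = sample_threshold c n0 S_old"
      have n0ge: "real n0 \<ge> 4 * c\<^sup>2" "real n0 \<ge> 2 * K" "n0 \<ge> 2"
        using n0N unfolding N_def by linarith+
      have npos: "real n \<ge> real n0" "real n > 0" using nSo n0ge unfolding n_def by auto
      have q_def': "q = c * ln (real n0) / real n" unfolding q_def sample_threshold_def n_def by simp
      have lnpos: "ln (real n0) > 0" using n0ge by simp
      have q0: "0 \<le> q" unfolding q_def' using cpos lnpos npos by simp
      have "c * ln (real n0) \<le> real n0" using c_ln_le[of c n0] cpos n0ge by simp
      then have q1: "q \<le> 1" unfolding q_def' using npos by (simp add: divide_simps)
      have qn: "q * real n = c * ln (real n0)" unfolding q_def' using npos by simp
      define E where "E t = {h \<in> space ?P.
        frac_new (sampled q h S_old) (sampled q h (S t)) + frac_left (sampled q h S_old) (sampled q h (S t)) \<le> 1/4 \<and>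
        frac_new S_old (S t) + frac_left S_old (S t) > 1/3}" for t
      have "\<forall>t\<in>{..<T}. \<exists>B\<in>sets ?P. E t \<subseteq> B \<and> measure ?P B \<le> 2 * exp (- (q * card S_old) / 200)"
      proof
        fix t assume "t \<in> {..<T}"
        then have "S t \<subseteq> U" using St by auto
        then show "\<exists>B\<in>sets ?P. E t \<subseteq> B \<and> measure ?P B \<le> 2 * exp (- (q * card S_old) / 200)"
          unfolding E_def using one_t[OF U So _ _ q0 q1] npos n_def by auto
      qed
      then obtain B where B: "\<And>t. t \<in> {..<T} \<Longrightarrow> B t \<in> sets ?P \<and> E t \<subseteq> B t \<and>
          measure ?P (B t) \<le> 2 * exp (- (q * card S_old) / 200)"
        by metis
      have ex: "exp (- (q * card S_old) / 200) = real n0 powr (- c / 200)"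
        using qn n0ge unfolding n_def by (simp add: powr_def)
      interpret prob_space ?P by (rule hash_prob)
      have "measure ?P {h \<in> space ?P. \<exists>t<T.
                let q = sample_threshold c n0 S_old;
                    S'_old = sampled q h S_old;
                    S' = sampled q h (S t)
                in frac_new S'_old S' + frac_left S'_old S' \<le> 1/4 \<and>
                   frac_new S_old (S t) + frac_left S_old (S t) > 1/3}
            \<le> measure ?P (\<Union>t\<in>{..<T}. B t)"
      proof (rule finite_measure_mono)
        show "(\<Union>t\<in>{..<T}. B t) \<in> sets ?P" using B by auto
        show "{h \<in> space ?P. \<exists>t<T.
                let q = sample_threshold c n0 S_old;
                    S'_old = sampled q h S_old;
                    S' = sampled q h (S t)
                in frac_new S'_old S' + frac_left S'_old S' \<le> 1/4 \<and>
                   frac_new S_old (S t) + frac_left S_old (S t) > 1/3} \<subseteq> (\<Union>t\<in>{..<T}. B t)"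
        proof
          fix h assume "h \<in> {h \<in> space ?P. \<exists>t<T.
                let q = sample_threshold c n0 S_old;
                    S'_old = sampled q h S_old;
                    S' = sampled q h (S t)
                in frac_new S'_old S' + frac_left S'_old S' \<le> 1/4 \<and>
                   frac_new S_old (S t) + frac_left S_old (S t) > 1/3}"
          then obtain t where "t < T" "h \<in> E t" unfolding E_def q_def Let_def by auto
          then show "h \<in> (\<Union>t\<in>{..<T}. B t)" using B by blast
        qed
      qed
      also have "\<dots> \<le> (\<Sum>t\<in>{..<T}. measure ?P (B t))"
        using B by (intro measure_UNION_le) auto
      also have "\<dots> \<le> (\<Sum>t\<in>{..<T}. 2 * real n0 powr (- c / 200))"
        using B ex by (intro sum_mono) auto
      also have "\<dots> = real T * (2 * real n0 powr (- c / 200))" by simp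
      also have "\<dots> \<le> (K * real n0 powr \<gamma>) * (2 * real n0 powr (- c / 200))"
        using TK by (intro mult_right_mono) auto
      also have "\<dots> = 2 * K * real n0 powr (\<gamma> - c / 200)"
        by (simp add: powr_add[symmetric])
      also have "\<dots> \<le> 2 * K * real n0 powr (- c' - 1)"
        using cc0 assms n0ge unfolding c0_def by (intro mult_left_mono powr_mono) auto
      also have "\<dots> = (2 * K / real n0) * real n0 powr (- c')"
        using n0ge by (simp add: powr_diff powr_minus divide_simps)
      also have "\<dots> \<le> 1 * real n0 powr (- c')"
        using n0ge by (intro mult_right_mono) auto
      finally show "measure ?P {h \<in> space ?P. \<exists>t<T.
                let q = sample_threshold c n0 S_old;
                    S'_old = sampled q h S_old;
                    S' = sampled q h (S t)
                in frac_new S'_old S' + frac_left S'_old S' \<le> 1/4 \<and>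
                   frac_new S_old (S t) + frac_left S_old (S t) > 1/3} \<le> real n0 powr (- c')" by simp
    qed
  qed
qed

end
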